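(* Let $G$ be a finite group acting on a complex abelian variety $A$, and let $H\le G$. Let $H_1,\dots,H_s$ be the double cosets of $H$ in $G$, and $q_i:=\frac1{|H|}\sum_{y\in H_i}y$. Let $V$ be an irreducible complex representation of $G$ with $\dim V^H=1$ and $\chi_V$ rational-valued, with associated irreducible rational representation $W$. Then $\chi_V(q_i)\in\mathbb{Z}$ for all $i$, and $$q_i(z)=\chi_V(q_i)\,z\quad\text{for all } z\in A_{H,\widetilde W}\text{ and all } i=1,\dots,s.$$
   Context: The action of $G$ on $A$ induces an algebra homomorphism $\mathbb{Q}[G]\to\mathrm{End}_{\mathbb Q}(A)$. Elements of $\mathbb{Q}[G]$ are identified with their images. Set $p_H:=\frac1{|H|}\sum_{h\in H}h$ and $A_H:=\mathrm{Im}(np_H)$ for a suitable positive integer $n$; the $q_i$ act as endomorphisms of $A_H$. $\chi_V$ is extended linearly to $\mathbb{Q}[G]$. Define $e_W:=\frac{\dim V}{|G|}\sum_{g}\chi_V(g^{-1})g$, $f_{H,\widetilde W}:=p_He_W$, and $A_{H,\widetilde W}:=\mathrm{Im}(f_{H,\widetilde W})$, with $\mathrm{Im}(\alpha)=\mathrm{Im}(n\alpha)$ for any positive integer $n$ making $n\alpha$ an endomorphism. *)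

theory Defs
  imports "HOL-Algebra.Coset" "Jordan_Normal_Form.Matrix"
begin

definition zmul :: "int \<Rightarrow> 'a::ab_group_add \<Rightarrow> 'a" where
  "zmul k a = (if 0 \<le> k then (\<Sum>i<nat k. a) else - (\<Sum>i<nat (- k). a))"

definition additive_action :: "('g, 'b) monoid_scheme \<Rightarrow> ('g \<Rightarrow> 'a::ab_group_add \<Rightarrow> 'a) \<Rightarrow> bool" where
  "additive_action G act \<longleftrightarrow>
     (\<forall>g\<in>carrier G. \<forall>a b. act g (a + b) = act g a + act g b) \<and>
     (\<forall>a. act \<one>\<^bsub>G\<^esub> a = a) \<and>
     (\<forall>x\<in>carrier G. \<forall>y\<in>carrier G. \<forall>a. act (x \<otimes>\<^bsub>G\<^esub> y) a = act x (act y a))"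

definition conv :: "('g, 'b) monoid_scheme \<Rightarrow> ('g \<Rightarrow> complex) \<Rightarrow> ('g \<Rightarrow> complex) \<Rightarrow> 'g \<Rightarrow> complex" where
  "conv G \<alpha> \<beta> g = (\<Sum>x\<in>carrier G. \<alpha> x * \<beta> (inv\<^bsub>G\<^esub> x \<otimes>\<^bsub>G\<^esub> g))"

definition integral_elt :: "('g, 'b) monoid_scheme \<Rightarrow> ('g \<Rightarrow> complex) \<Rightarrow> bool" where
  "integral_elt G \<alpha> \<longleftrightarrow> (\<forall>g\<in>carrier G. \<alpha> g \<in> \<int>)"

definition int_act :: "('g, 'b) monoid_scheme \<Rightarrow> ('g \<Rightarrow> 'a::ab_group_add \<Rightarrow> 'a) \<Rightarrow> ('g \<Rightarrow> complex) \<Rightarrow> 'a \<Rightarrow> 'a" where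
  "int_act G act \<alpha> a = (\<Sum>g\<in>carrier G. zmul (THE k. \<alpha> g = of_int k) (act g a))"

definition p_elt :: "('g, 'b) monoid_scheme \<Rightarrow> 'g set \<Rightarrow> 'g \<Rightarrow> complex" where
  "p_elt G H g = (if g \<in> H then 1 / of_nat (card H) else 0)"

definition character :: "('g \<Rightarrow> complex mat) \<Rightarrow> 'g \<Rightarrow> complex" where
  "character \<rho> g = (\<Sum>i<dim_row (\<rho> g). \<rho> g $$ (i, i))"

definition char_ext :: "('g, 'b) monoid_scheme \<Rightarrow> ('g \<Rightarrow> complex) \<Rightarrow> ('g \<Rightarrow> complex) \<Rightarrow> complex" where
  "char_ext G \<chi> \<alpha> = (\<Sum>g\<in>carrier G. \<alpha> g * \<chi> g)"

definition e_elt :: "('g, 'b) monoid_scheme \<Rightarrow> nat \<Rightarrow> ('g \<Rightarrow> complex) \<Rightarrow> 'g \<Rightarrow> complex" where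
  "e_elt G d \<chi> g = of_nat d / of_nat (card (carrier G)) * \<chi> (inv\<^bsub>G\<^esub> g)"

definition double_coset :: "('g, 'b) monoid_scheme \<Rightarrow> 'g set \<Rightarrow> 'g \<Rightarrow> 'g set" where
  "double_coset G H x = {h \<otimes>\<^bsub>G\<^esub> x \<otimes>\<^bsub>G\<^esub> k | h k. h \<in> H \<and> k \<in> H}"

definition q_elt :: "('g, 'b) monoid_scheme \<Rightarrow> 'g set \<Rightarrow> 'g set \<Rightarrow> 'g \<Rightarrow> complex" where
  "q_elt G H D g = (if g \<in> D then 1 / of_nat (card H) else 0)"

text \<open>Action of \<open>q_D\<close> on \<open>H\<close>-invariant elements: writing \<open>D = \<Union> x_j H\<close>,
  \<open>q_D = \<Sum>_j x_j p_H\<close>, so \<open>q_D z = \<Sum>_j x_j z\<close> for \<open>H\<close>-invariant \<open>z\<close>.\<close>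
definition q_act :: "('g, 'b) monoid_scheme \<Rightarrow> ('g \<Rightarrow> 'a::ab_group_add \<Rightarrow> 'a) \<Rightarrow> 'g set \<Rightarrow> 'g set \<Rightarrow> 'a \<Rightarrow> 'a" where
  "q_act G act H D z = (\<Sum>C\<in>{x <#\<^bsub>G\<^esub> H | x. x \<in> D}. act (SOME x. x \<in> C) z)"

definition matrix_rep :: "('g, 'b) monoid_scheme \<Rightarrow> nat \<Rightarrow> ('g \<Rightarrow> complex mat) \<Rightarrow> bool" where
  "matrix_rep G d \<rho> \<longleftrightarrow>
     (\<forall>g\<in>carrier G. \<rho> g \<in> carrier_mat d d) \<and>
     \<rho> \<one>\<^bsub>G\<^esub> = 1\<^sub>m d \<and>
     (\<forall>x\<in>carrier G. \<forall>y\<in>carrier G. \<rho> (x \<otimes>\<^bsub>G\<^esub> y) = \<rho> x * \<rho> y)"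

definition complex_subspace :: "nat \<Rightarrow> complex vec set \<Rightarrow> bool" where
  "complex_subspace d S \<longleftrightarrow> S \<subseteq> carrier_vec d \<and> 0\<^sub>v d \<in> S \<and>
     (\<forall>v\<in>S. \<forall>w\<in>S. v + w \<in> S) \<and> (\<forall>c. \<forall>v\<in>S. c \<cdot>\<^sub>v v \<in> S)"

definition irreducible_rep :: "('g, 'b) monoid_scheme \<Rightarrow> nat \<Rightarrow> ('g \<Rightarrow> complex mat) \<Rightarrow> bool" where
  "irreducible_rep G d \<rho> \<longleftrightarrow> matrix_rep G d \<rho> \<and> d > 0 \<and>
     (\<forall>S. complex_subspace d S \<and> (\<forall>g\<in>carrier G. \<forall>v\<in>S. \<rho> g *\<^sub>v v \<in> S)
          \<longrightarrow> S = {0\<^sub>v d} \<or> S = carrier_vec d)"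

definition fixed_space :: "nat \<Rightarrow> ('g \<Rightarrow> complex mat) \<Rightarrow> 'g set \<Rightarrow> complex vec set" where
  "fixed_space d \<rho> H = {v \<in> carrier_vec d. \<forall>h\<in>H. \<rho> h *\<^sub>v v = v}"

definition one_dimensional :: "nat \<Rightarrow> complex vec set \<Rightarrow> bool" where
  "one_dimensional d S \<longleftrightarrow> (\<exists>v\<in>carrier_vec d. v \<noteq> 0\<^sub>v d \<and> S = {c \<cdot>\<^sub>v v | c. True})"

end

theory Submission
  imports Defs "Jordan_Normal_Form.Char_Poly"
begin

section \<open>Integer multiples\<close>

definition Sm :: "nat \<Rightarrow> 'a::ab_group_add \<Rightarrow> 'a" where "Sm n a = (\<Sum>i<n. a)"

lemma Sm_add_nat: "Sm (m + n) a = Sm m a + Sm n a"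
  unfolding Sm_def by (induction n) (auto simp: algebra_simps)

lemma Sm_0[simp]: "Sm 0 a = 0" by (simp add: Sm_def)

lemma Sm_add_elt: "Sm m (a + b) = Sm m a + Sm m b"
  unfolding Sm_def by (simp add: sum.distrib)

lemma Sm_diff_elt: "Sm m (a - b) = Sm m a - Sm m b"
  unfolding Sm_def by (simp add: sum_subtractf)

lemma Sm_Sm: "Sm m (Sm p a) = Sm (m * p) a"
proof (induction m)
  case (Suc m)
  then show ?case using Sm_add_nat[of p "m*p" a] by (simp add: Sm_def)
qed (simp add: Sm_def)

lemma Sm_hom:
  assumes "\<And>x y. f (x + y) = f x + f y"
  shows "f (Sm m a) = Sm m (f a)"
proof -
  have f0: "f 0 = 0" using assms[of 0 0] by simp
  show ?thesis unfolding Sm_def by (induction m) (auto simp: assms f0)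
qed

lemma zmul_diff: "zmul (int m - int n) a = Sm m a - Sm n a"
proof (cases "n \<le> m")
  case True
  have e: "int m - int n = int (m - n)" using True by simp
  have z: "zmul (int (m - n)) a = Sm (m - n) a" by (simp add: zmul_def Sm_def)
  have s: "Sm m a = Sm (m - n) a + Sm n a" using True Sm_add_nat[of "m-n" n a] by simp
  show ?thesis unfolding e z s by simp
next
  case False
  have e: "int m - int n = - int (n - m)" using False by simp
  have nn: "nat (int n - int m) = n - m" by arith
  have z: "zmul (- int (n - m)) a = - Sm (n - m) a" using False nn by (simp add: zmul_def Sm_def)
  have s: "Sm n a = Sm (n - m) a + Sm m a" using False Sm_add_nat[of "n-m" m a] by simp
  show ?thesis unfolding e z s by simp
qed

lemma int_split: obtains m n where "k = int m - int n"
proof -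
  have "k = int (nat k) - int (nat (- k))" by arith
  then show ?thesis by (rule that)
qed

lemma zmul_add_left: "zmul (k + l) a = zmul k a + zmul l a"
proof -
  obtain m1 n1 where k: "k = int m1 - int n1" by (rule int_split)
  obtain m2 n2 where l: "l = int m2 - int n2" by (rule int_split)
  have e: "k + l = int (m1 + m2) - int (n1 + n2)" using k l by simp
  have "zmul (k + l) a = Sm (m1 + m2) a - Sm (n1 + n2) a" unfolding e by (rule zmul_diff)
  then show ?thesis using k l by (simp add: zmul_diff Sm_add_nat)
qed

lemma zmul_0[simp]: "zmul 0 a = 0" by (simp add: zmul_def)
lemma zmul_0_right[simp]: "zmul k 0 = 0" by (simp add: zmul_def)

lemma zmul_add_right: "zmul k (a + b) = zmul k a + zmul k b"
proof -
  obtain m1 n1 where k: "k = int m1 - int n1" by (rule int_split)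
  show ?thesis using k by (simp add: zmul_diff Sm_add_elt)
qed

lemma zmul_mult: "zmul (k * l) a = zmul k (zmul l a)"
proof -
  obtain m1 n1 where k: "k = int m1 - int n1" by (rule int_split)
  obtain m2 n2 where l: "l = int m2 - int n2" by (rule int_split)
  have e: "k * l = int (m1 * m2 + n1 * n2) - int (m1 * n2 + n1 * m2)" unfolding k l
    by (simp add: algebra_simps)
  have "zmul (k * l) a = Sm (m1 * m2 + n1 * n2) a - Sm (m1 * n2 + n1 * m2) a"
    unfolding e by (rule zmul_diff)
  then show ?thesis using k l by (simp add: zmul_diff Sm_add_nat Sm_diff_elt Sm_Sm)
qed

lemma zmul_sum: "zmul k (sum f A) = (\<Sum>x\<in>A. zmul k (f x))"
  by (induction A rule: infinite_finite_induct) (auto simp: zmul_add_right)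

lemma zmul_hom:
  assumes "\<And>x y. f (x + y) = f x + f y"
  shows "f (zmul k a) = zmul k (f a)"
proof -
  obtain m1 n1 where k: "k = int m1 - int n1" by (rule int_split)
  have f0: "f 0 = 0" using assms[of 0 0] by simp
  have fd: "f (x - y) = f x - f y" for x y
    using assms[of "x - y" y] by (simp add: algebra_simps)
  have h: "f (Sm m a) = Sm m (f a)" for m a by (rule Sm_hom[of f, OF assms])
  have "f (zmul k a) = f (Sm m1 a - Sm n1 a)" unfolding k by (simp only: zmul_diff)
  also have "\<dots> = Sm m1 (f a) - Sm n1 (f a)" by (simp only: fd h)
  also have "\<dots> = zmul k (f a)" unfolding k by (simp only: zmul_diff)
  finally show ?thesis .
qed

definition ti :: "complex \<Rightarrow> int" where "ti z = (THE k. z = of_int k)"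

lemma ti_of_int[simp]: "ti (of_int m) = m"
  unfolding ti_def by (rule the_equality) auto

lemma ti_Ints: "z \<in> \<int> \<Longrightarrow> of_int (ti z) = z"
  by (auto elim: Ints_cases)

lemma int_act_ti: "int_act G act \<alpha> a = (\<Sum>g\<in>carrier G. zmul (ti (\<alpha> g)) (act g a))"
  unfolding int_act_def ti_def ..

section \<open>Cosets\<close>

locale hgrp = group G for G (structure) +
  fixes H
  assumes sub: "subgroup H G" and fin: "finite (carrier G)"
begin

lemma H_sub: "H \<subseteq> carrier G" by (rule subgroup.subset[OF sub])
lemma H_one: "\<one> \<in> H" by (rule subgroup.one_closed[OF sub])
lemma H_mult: "h \<in> H \<Longrightarrow> k \<in> H \<Longrightarrow> h \<otimes> k \<in> H" by (rule subgroup.m_closed[OF sub])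
lemma H_inv: "h \<in> H \<Longrightarrow> inv h \<in> H" by (rule subgroup.m_inv_closed[OF sub])
lemma H_car: "h \<in> H \<Longrightarrow> h \<in> carrier G" using H_sub by blast
lemma finH: "finite H" using H_sub fin finite_subset by blast
lemma cardH: "card H > 0" using finH H_one by (auto simp: card_gt_0_iff)

lemma lcos_def': "l_coset G x H = {x \<otimes> h | h. h \<in> H}"
  unfolding l_coset_def by blast

lemma lcos_self: assumes "x \<in> carrier G" shows "x \<in> l_coset G x H"
proof -
  have "x = x \<otimes> \<one>" using assms by simp
  then show ?thesis unfolding lcos_def' using H_one by blast
qed

lemma lcos_sub: "x \<in> carrier G \<Longrightarrow> l_coset G x H \<subseteq> carrier G"
  unfolding lcos_def' using H_car by blast

lemma lcos_eq:
  assumes x: "x \<in> carrier G" and y: "y \<in> l_coset G x H"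
  shows "l_coset G y H = l_coset G x H"
proof -
  obtain h where h: "h \<in> H" "y = x \<otimes> h" using y unfolding lcos_def' by blast
  show ?thesis
  proof (intro equalityI subsetI)
    fix z assume "z \<in> l_coset G y H"
    then obtain k where k: "k \<in> H" "z = y \<otimes> k" unfolding lcos_def' by blast
    then have "z = x \<otimes> (h \<otimes> k)" using h x H_car by (simp add: m_assoc)
    then show "z \<in> l_coset G x H" unfolding lcos_def' using H_mult h k by blast
  next
    fix z assume "z \<in> l_coset G x H"
    then obtain k where k: "k \<in> H" "z = x \<otimes> k" unfolding lcos_def' by blast
    have hc: "h \<in> carrier G" and kc: "k \<in> carrier G" using h k H_car by auto
    have hk: "h \<otimes> (inv h \<otimes> k) = k" using hc kc by (simp add: m_assoc[symmetric])
    have "y \<otimes> (inv h \<otimes> k) = x \<otimes> k" using hc kc x hk by (simp add: h(2) m_assoc)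
    then have "z = y \<otimes> (inv h \<otimes> k)" using k by simp
    then show "z \<in> l_coset G y H" unfolding lcos_def' using H_mult H_inv h k by blast
  qed
qed

definition LC :: "'a set \<Rightarrow> 'a set set" where
  "LC E = {l_coset G x H | x. x \<in> E}"

lemma LC_rep:
  assumes E: "E \<subseteq> carrier G" and C: "C \<in> LC E"
  shows "(SOME y. y \<in> C) \<in> C" "l_coset G (SOME y. y \<in> C) H = C"
    "(SOME y. y \<in> C) \<in> carrier G"
proof -
  obtain x where x: "x \<in> E" "C = l_coset G x H" using C unfolding LC_def by blast
  then have xc: "x \<in> carrier G" using E by blast
  then have "x \<in> C" using x lcos_self by blast
  then show r: "(SOME y. y \<in> C) \<in> C" by (rule someI)
  then show "l_coset G (SOME y. y \<in> C) H = C" using lcos_eq[OF xc] x by blast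
  show "(SOME y. y \<in> C) \<in> carrier G" using r x lcos_sub[OF xc] by blast
qed

lemma sum_lcos:
  assumes x: "x \<in> carrier G"
  shows "sum f (l_coset G x H) = (\<Sum>h\<in>H. f (x \<otimes> h))"
proof -
  have "l_coset G x H = (\<lambda>h. x \<otimes> h) ` H" unfolding lcos_def' by blast
  moreover have "inj_on (\<lambda>h. x \<otimes> h) H" using x H_car by (auto simp: inj_on_def)
  ultimately show ?thesis by (simp add: sum.reindex)
qed

lemma sum_LC:
  assumes E: "E \<subseteq> carrier G" and cl: "\<And>y h. y \<in> E \<Longrightarrow> h \<in> H \<Longrightarrow> y \<otimes> h \<in> E"
  shows "sum f E = (\<Sum>C\<in>LC E. sum f C)"
proof -
  have finE: "finite E" using E fin finite_subset by blast
  have U: "\<Union>(LC E) = E"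
  proof (intro equalityI subsetI)
    fix y assume "y \<in> \<Union>(LC E)"
    then obtain x where "x \<in> E" "y \<in> l_coset G x H" unfolding LC_def by blast
    then show "y \<in> E" using cl unfolding lcos_def' by blast
  next
    fix y assume "y \<in> E" then show "y \<in> \<Union>(LC E)" unfolding LC_def using lcos_self E by blast
  qed
  have "\<forall>C\<in>LC E. finite C" using U finE by (metis Union_upper finite_subset)
  moreover have "\<forall>A\<in>LC E. \<forall>B\<in>LC E. A \<noteq> B \<longrightarrow> A \<inter> B = {}"
  proof (intro ballI impI)
    fix A B assume A: "A \<in> LC E" and B: "B \<in> LC E" and ne: "A \<noteq> B"
    obtain a where a: "a \<in> E" "A = l_coset G a H" using A unfolding LC_def by blast
    obtain b where b: "b \<in> E" "B = l_coset G b H" using B unfolding LC_def by blast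
    show "A \<inter> B = {}"
    proof (rule ccontr)
      assume "A \<inter> B \<noteq> {}"
      then obtain y where y: "y \<in> A" "y \<in> B" by blast
      have "l_coset G y H = A" using lcos_eq a y E by blast
      moreover have "l_coset G y H = B" using lcos_eq b y E by blast
      ultimately show False using ne by simp
    qed
  qed
  ultimately have "sum f (\<Union>(LC E)) = (sum \<circ> sum) f (LC E)" by (rule sum.Union_disjoint)
  then show ?thesis using U by simp
qed

lemma dc_def': "double_coset G H x = {h \<otimes> x \<otimes> k | h k. h \<in> H \<and> k \<in> H}"
  unfolding double_coset_def ..

lemma dc_sub: "x \<in> carrier G \<Longrightarrow> double_coset G H x \<subseteq> carrier G"
  unfolding double_coset_def using H_car by blast

lemma dc_right:
  assumes x: "x \<in> carrier G" and y: "y \<in> double_coset G H x" and k: "k \<in> H"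
  shows "y \<otimes> k \<in> double_coset G H x"
proof -
  obtain h1 k1 where hk: "h1 \<in> H" "k1 \<in> H" "y = h1 \<otimes> x \<otimes> k1" using y unfolding dc_def' by blast
  then have "y \<otimes> k = h1 \<otimes> x \<otimes> (k1 \<otimes> k)" using x k H_car by (simp add: m_assoc)
  then show ?thesis unfolding dc_def' using hk H_mult k by blast
qed

lemma dc_left:
  assumes x: "x \<in> carrier G" and y: "y \<in> double_coset G H x" and k: "k \<in> H"
  shows "k \<otimes> y \<in> double_coset G H x"
proof -
  obtain h1 k1 where hk: "h1 \<in> H" "k1 \<in> H" "y = h1 \<otimes> x \<otimes> k1" using y unfolding dc_def' by blast
  then have "k \<otimes> y = (k \<otimes> h1) \<otimes> x \<otimes> k1" using x k H_car by (simp add: m_assoc)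
  then show ?thesis unfolding dc_def' using hk H_mult k by blast
qed

lemma dc_left_iff:
  assumes "x \<in> carrier G" "y \<in> carrier G" "k \<in> H"
  shows "k \<otimes> y \<in> double_coset G H x \<longleftrightarrow> y \<in> double_coset G H x"
proof
  assume "k \<otimes> y \<in> double_coset G H x"
  from dc_left[OF assms(1) this H_inv[OF assms(3)]] show "y \<in> double_coset G H x"
    using assms H_car by (simp add: m_assoc[symmetric])
next
  assume "y \<in> double_coset G H x"
  then show "k \<otimes> y \<in> double_coset G H x" using dc_left assms by blast
qed

lemma dc_right_iff:
  assumes "x \<in> carrier G" "y \<in> carrier G" "k \<in> H"
  shows "y \<otimes> k \<in> double_coset G H x \<longleftrightarrow> y \<in> double_coset G H x"
proof
  assume "y \<otimes> k \<in> double_coset G H x"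
  from dc_right[OF assms(1) this H_inv[OF assms(3)]] show "y \<in> double_coset G H x"
    using assms H_car by (simp add: m_assoc)
next
  assume "y \<in> double_coset G H x"
  then show "y \<otimes> k \<in> double_coset G H x" using dc_right assms by blast
qed

lemma dc_one: assumes "x \<in> carrier G" shows "x \<in> double_coset G H x"
proof -
  have "x = \<one> \<otimes> x \<otimes> \<one>" using assms by simp
  then show ?thesis unfolding dc_def' using H_one by blast
qed

end

lemma mat_mult_entry:
  fixes A :: "complex mat"
  assumes "A \<in> carrier_mat n n" "B \<in> carrier_mat n n" "i < n" "j < n"
  shows "(A * B) $$ (i, j) = (\<Sum>k<n. A $$ (i, k) * B $$ (k, j))"
  using assms by (simp add: scalar_prod_def atLeast0LessThan)

lemma mat_vec_entry:
  fixes A :: "complex mat"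
  assumes "A \<in> carrier_mat n n" "v \<in> carrier_vec n" "i < n"
  shows "(A *\<^sub>v v) $ i = (\<Sum>k<n. A $$ (i, k) * v $ k)"
  using assms by (simp add: scalar_prod_def atLeast0LessThan)

lemma mat_unit_entry:
  fixes A :: "complex mat"
  assumes "A \<in> carrier_mat n n" "i < n" "j < n"
  shows "(A *\<^sub>v unit_vec n j) $ i = A $$ (i, j)"
proof -
  have "(A *\<^sub>v unit_vec n j) $ i = (\<Sum>k<n. A $$ (i, k) * unit_vec n j $ k)"
    by (rule mat_vec_entry) (use assms in auto)
  also have "\<dots> = (\<Sum>k<n. if k = j then A $$ (i, j) else 0)"
    using assms by (intro sum.cong) auto
  also have "\<dots> = A $$ (i, j)" using assms by simp
  finally show ?thesis .
qed

section \<open>Representations\<close>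

context hgrp
begin

lemma cancel_l1[simp]: "x \<in> carrier G \<Longrightarrow> y \<in> carrier G \<Longrightarrow> x \<otimes> (inv x \<otimes> y) = y"
  by (simp add: m_assoc[symmetric])

lemma cancel_l2[simp]: "x \<in> carrier G \<Longrightarrow> y \<in> carrier G \<Longrightarrow> inv x \<otimes> (x \<otimes> y) = y"
  by (simp add: m_assoc[symmetric])

lemma sum_reindex_left:
  assumes x: "x \<in> carrier G"
  shows "(\<Sum>g\<in>carrier G. f g) = (\<Sum>y\<in>carrier G. f (x \<otimes> y))"
  by (rule sum.reindex_bij_witness[where i="\<lambda>y. x \<otimes> y" and j="\<lambda>g. inv x \<otimes> g"])
    (use x in auto)

lemma sum_reindex_inv:
  "(\<Sum>g\<in>carrier G. f g) = (\<Sum>y\<in>carrier G. f (inv y))"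
  by (rule sum.reindex_bij_witness[where i="\<lambda>g. inv g" and j="\<lambda>y. inv y"]) auto

lemma sum_on_H:
  "(\<Sum>g\<in>carrier G. p_elt G H g * f g) = (\<Sum>h\<in>H. f h) / of_nat (card H)"
proof -
  have "(\<Sum>g\<in>carrier G. p_elt G H g * f g) = (\<Sum>g\<in>carrier G. if g \<in> H then f g / of_nat (card H) else 0)"
    unfolding p_elt_def by (intro sum.cong) auto
  also have "\<dots> = (\<Sum>g\<in>carrier G \<inter> H. f g / of_nat (card H))"
    using fin by (simp add: sum.inter_restrict)
  also have "carrier G \<inter> H = H" using H_sub by blast
  finally show ?thesis by (simp add: sum_divide_distrib)
qed

lemma sum_on_D:
  "(\<Sum>g\<in>carrier G. q_elt G H D g * f g) = (\<Sum>h\<in>carrier G \<inter> D. f h) / of_nat (card H)"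
proof -
  have "(\<Sum>g\<in>carrier G. q_elt G H D g * f g) = (\<Sum>g\<in>carrier G. if g \<in> D then f g / of_nat (card H) else 0)"
    unfolding q_elt_def by (intro sum.cong) auto
  also have "\<dots> = (\<Sum>g\<in>carrier G \<inter> D. f g / of_nat (card H))"
    using fin by (simp add: sum.inter_restrict)
  finally show ?thesis by (simp add: sum_divide_distrib)
qed

lemma conv_alt:
  assumes g: "g \<in> carrier G"
  shows "conv G \<alpha> \<beta> g = (\<Sum>y\<in>carrier G. \<alpha> (g \<otimes> inv y) * \<beta> y)"
proof -
  have "conv G \<alpha> \<beta> g = (\<Sum>x\<in>carrier G. \<alpha> x * \<beta> (inv x \<otimes> g))" unfolding conv_def ..
  also have "\<dots> = (\<Sum>y\<in>carrier G. \<alpha> (g \<otimes> inv y) * \<beta> y)"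
  proof (rule sum.reindex_bij_witness[where i="\<lambda>y. g \<otimes> inv y" and j="\<lambda>x. inv x \<otimes> g"])
    fix a assume a: "a \<in> carrier G"
    have "inv (inv a \<otimes> g) = inv g \<otimes> a" using a g by (simp add: inv_mult_group)
    then show "g \<otimes> inv (inv a \<otimes> g) = a" using a g by simp
    show "inv a \<otimes> g \<in> carrier G" using a g by simp
    then show "\<alpha> (g \<otimes> inv (inv a \<otimes> g)) * \<beta> (inv a \<otimes> g) = \<alpha> a * \<beta> (inv a \<otimes> g)"
      using \<open>g \<otimes> inv (inv a \<otimes> g) = a\<close> by simp
  next
    fix b assume b: "b \<in> carrier G"
    have "inv (g \<otimes> inv b) = b \<otimes> inv g" using b g by (simp add: inv_mult_group)
    then show "inv (g \<otimes> inv b) \<otimes> g = b" using b g by (simp add: m_assoc)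
    show "g \<otimes> inv b \<in> carrier G" using b g by simp
  qed
  finally show ?thesis .
qed

lemma conv_p_q:
  assumes x: "x \<in> carrier G" and g: "g \<in> carrier G"
  shows "conv G (p_elt G H) (q_elt G H (double_coset G H x)) g = q_elt G H (double_coset G H x) g"
proof -
  let ?q = "q_elt G H (double_coset G H x)"
  have "conv G (p_elt G H) ?q g = (\<Sum>h\<in>H. ?q (inv h \<otimes> g)) / of_nat (card H)"
    unfolding conv_def by (rule sum_on_H)
  also have "(\<Sum>h\<in>H. ?q (inv h \<otimes> g)) = (\<Sum>h\<in>H. ?q g)"
    using x g H_inv by (intro sum.cong) (auto simp: q_elt_def dc_left_iff)
  finally show ?thesis using cardH by simp
qed

lemma conv_q_p:
  assumes x: "x \<in> carrier G" and g: "g \<in> carrier G"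
  shows "conv G (q_elt G H (double_coset G H x)) (p_elt G H) g = q_elt G H (double_coset G H x) g"
proof -
  let ?q = "q_elt G H (double_coset G H x)"
  have "conv G ?q (p_elt G H) g = (\<Sum>y\<in>carrier G. p_elt G H y * ?q (g \<otimes> inv y))"
    unfolding conv_alt[OF g] by (simp add: mult.commute)
  also have "\<dots> = (\<Sum>h\<in>H. ?q (g \<otimes> inv h)) / of_nat (card H)" by (rule sum_on_H)
  also have "(\<Sum>h\<in>H. ?q (g \<otimes> inv h)) = (\<Sum>h\<in>H. ?q g)"
    using x g H_inv by (intro sum.cong) (auto simp: q_elt_def dc_right_iff)
  finally show ?thesis using cardH by simp
qed

lemma conv_delta:
  assumes x: "x \<in> carrier G" and g: "g \<in> carrier G"
  shows "conv G (\<lambda>y. if y = x then 1 else 0) \<beta> g = \<beta> (inv x \<otimes> g)"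
proof -
  have "conv G (\<lambda>y. if y = x then 1 else 0) \<beta> g = (\<Sum>y\<in>carrier G. if y = x then \<beta> (inv x \<otimes> g) else 0)"
    unfolding conv_def by (intro sum.cong) auto
  also have "\<dots> = \<beta> (inv x \<otimes> g)" using x fin by simp
  finally show ?thesis .
qed

end

locale hrep = hgrp +
  fixes d :: nat and \<rho> :: "'a \<Rightarrow> complex mat"
  assumes rep: "matrix_rep G d \<rho>"
begin

lemma rho_car: "g \<in> carrier G \<Longrightarrow> \<rho> g \<in> carrier_mat d d"
  using rep[unfolded matrix_rep_def, THEN conjunct1] by blast

lemma rho_mult: "x \<in> carrier G \<Longrightarrow> y \<in> carrier G \<Longrightarrow> \<rho> (x \<otimes> y) = \<rho> x * \<rho> y"
  using rep[unfolded matrix_rep_def, THEN conjunct2, THEN conjunct2] by blast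

lemma rho_mult_entry:
  assumes "x \<in> carrier G" "y \<in> carrier G" "i < d" "j < d"
  shows "\<rho> (x \<otimes> y) $$ (i, j) = (\<Sum>k<d. \<rho> x $$ (i, k) * \<rho> y $$ (k, j))"
  unfolding rho_mult[OF assms(1,2)] by (rule mat_mult_entry) (use rho_car assms in auto)

definition Rm :: "('a \<Rightarrow> complex) \<Rightarrow> complex mat" where
  "Rm \<alpha> = mat d d (\<lambda>(i, j). \<Sum>g\<in>carrier G. \<alpha> g * \<rho> g $$ (i, j))"

lemma Rm_car[simp]: "Rm \<alpha> \<in> carrier_mat d d" unfolding Rm_def by simp
lemma Rm_dim[simp]: "dim_row (Rm \<alpha>) = d" "dim_col (Rm \<alpha>) = d" unfolding Rm_def by simp_all
lemma rho_dim[simp]: "g \<in> carrier G \<Longrightarrow> dim_row (\<rho> g) = d"  "g \<in> carrier G \<Longrightarrow> dim_col (\<rho> g) = d"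
  using rho_car[of g] by auto

lemma Rm_entry: "i < d \<Longrightarrow> j < d \<Longrightarrow> Rm \<alpha> $$ (i, j) = (\<Sum>g\<in>carrier G. \<alpha> g * \<rho> g $$ (i, j))"
  unfolding Rm_def by simp

lemma Rm_cong: "(\<And>g. g \<in> carrier G \<Longrightarrow> \<alpha> g = \<beta> g) \<Longrightarrow> Rm \<alpha> = Rm \<beta>"
  unfolding Rm_def by (intro cong_mat refl) (auto intro!: sum.cong)

lemma Rm_delta:
  assumes x: "x \<in> carrier G"
  shows "Rm (\<lambda>y. if y = x then 1 else 0) = \<rho> x"
proof (rule eq_matI)
  fix i j assume ij: "i < dim_row (\<rho> x)" "j < dim_col (\<rho> x)"
  then have ij': "i < d" "j < d" using rho_car[OF x] by auto
  have "Rm (\<lambda>y. if y = x then 1 else 0) $$ (i, j) = (\<Sum>g\<in>carrier G. if g = x then \<rho> x $$ (i, j) else 0)"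
    unfolding Rm_entry[OF ij'] by (intro sum.cong) auto
  also have "\<dots> = \<rho> x $$ (i, j)" using x fin by simp
  finally show "Rm (\<lambda>y. if y = x then 1 else 0) $$ (i, j) = \<rho> x $$ (i, j)" .
qed (use rho_car[OF x] in auto)

lemma Rm_mult: "Rm \<alpha> * Rm \<beta> = Rm (conv G \<alpha> \<beta>)"
proof (rule eq_matI)
  fix i j assume "i < dim_row (Rm (conv G \<alpha> \<beta>))" "j < dim_col (Rm (conv G \<alpha> \<beta>))"
  then have ij: "i < d" "j < d" by auto
  have "(Rm \<alpha> * Rm \<beta>) $$ (i, j) = (\<Sum>k<d. Rm \<alpha> $$ (i, k) * Rm \<beta> $$ (k, j))"
    using ij by (intro mat_mult_entry) auto
  also have "\<dots> = (\<Sum>k<d. (\<Sum>x\<in>carrier G. \<alpha> x * \<rho> x $$ (i, k)) * (\<Sum>y\<in>carrier G. \<beta> y * \<rho> y $$ (k, j)))"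
    using ij by (intro sum.cong) (auto simp: Rm_entry)
  also have "\<dots> = (\<Sum>k<d. \<Sum>x\<in>carrier G. \<Sum>y\<in>carrier G. \<alpha> x * \<beta> y * (\<rho> x $$ (i, k) * \<rho> y $$ (k, j)))"
    by (simp add: sum_product mult_ac)
  also have "\<dots> = (\<Sum>x\<in>carrier G. \<Sum>y\<in>carrier G. \<Sum>k<d. \<alpha> x * \<beta> y * (\<rho> x $$ (i, k) * \<rho> y $$ (k, j)))"
    by (simp add: sum.swap[where A="lessThan d"])
  also have "\<dots> = (\<Sum>x\<in>carrier G. \<Sum>y\<in>carrier G. \<alpha> x * \<beta> y * \<rho> (x \<otimes> y) $$ (i, j))"
    using ij by (intro sum.cong refl) (simp add: rho_mult_entry sum_distrib_left)
  also have "\<dots> = (\<Sum>x\<in>carrier G. \<alpha> x * (\<Sum>g\<in>carrier G. \<beta> (inv x \<otimes> g) * \<rho> g $$ (i, j)))"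
  proof (intro sum.cong refl)
    fix x assume x: "x \<in> carrier G"
    have "(\<Sum>g\<in>carrier G. \<beta> (inv x \<otimes> g) * \<rho> g $$ (i, j)) = (\<Sum>y\<in>carrier G. \<beta> (inv x \<otimes> (x \<otimes> y)) * \<rho> (x \<otimes> y) $$ (i, j))"
      by (rule sum_reindex_left[OF x])
    also have "\<dots> = (\<Sum>y\<in>carrier G. \<beta> y * \<rho> (x \<otimes> y) $$ (i, j))"
      using x by (intro sum.cong) (auto simp: m_assoc[symmetric])
    finally show "(\<Sum>y\<in>carrier G. \<alpha> x * \<beta> y * \<rho> (x \<otimes> y) $$ (i, j)) = \<alpha> x * (\<Sum>g\<in>carrier G. \<beta> (inv x \<otimes> g) * \<rho> g $$ (i, j))"
      by (simp add: sum_distrib_left mult_ac)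
  qed
  also have "\<dots> = (\<Sum>g\<in>carrier G. conv G \<alpha> \<beta> g * \<rho> g $$ (i, j))"
    unfolding conv_def sum_distrib_right sum_distrib_left by (subst sum.swap) (simp add: mult_ac)
  also have "\<dots> = Rm (conv G \<alpha> \<beta>) $$ (i, j)" using ij by (simp add: Rm_entry)
  finally show "(Rm \<alpha> * Rm \<beta>) $$ (i, j) = Rm (conv G \<alpha> \<beta>) $$ (i, j)" .
qed auto

lemma Rm_vec:
  assumes v: "v \<in> carrier_vec d" and i: "i < d"
  shows "(Rm \<alpha> *\<^sub>v v) $ i = (\<Sum>g\<in>carrier G. \<alpha> g * (\<rho> g *\<^sub>v v) $ i)"
proof -
  have "(Rm \<alpha> *\<^sub>v v) $ i = (\<Sum>k<d. Rm \<alpha> $$ (i, k) * v $ k)" by (rule mat_vec_entry) (use v i in auto)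
  also have "\<dots> = (\<Sum>k<d. \<Sum>g\<in>carrier G. \<alpha> g * (\<rho> g $$ (i, k) * v $ k))"
    using i by (intro sum.cong) (auto simp: Rm_entry sum_distrib_left sum_distrib_right mult_ac)
  also have "\<dots> = (\<Sum>g\<in>carrier G. \<alpha> g * (\<Sum>k<d. \<rho> g $$ (i, k) * v $ k))"
    by (simp add: sum.swap[where A="lessThan d"] sum_distrib_left)
  also have "\<dots> = (\<Sum>g\<in>carrier G. \<alpha> g * (\<rho> g *\<^sub>v v) $ i)"
  proof -
    have e: "(\<rho> g *\<^sub>v v) $ i = (\<Sum>k<d. \<rho> g $$ (i, k) * v $ k)" if "g \<in> carrier G" for g
      by (rule mat_vec_entry) (use rho_car that v i in auto)
    show ?thesis by (intro sum.cong refl) (simp only: e)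
  qed
  finally show ?thesis .
qed

lemma Rm_trace: "(\<Sum>i<d. Rm \<alpha> $$ (i, i)) = char_ext G (character \<rho>) \<alpha>"
proof -
  have "(\<Sum>i<d. Rm \<alpha> $$ (i, i)) = (\<Sum>i<d. \<Sum>g\<in>carrier G. \<alpha> g * \<rho> g $$ (i, i))"
    by (intro sum.cong) (auto simp: Rm_entry)
  also have "\<dots> = (\<Sum>g\<in>carrier G. \<alpha> g * (\<Sum>i<d. \<rho> g $$ (i, i)))"
    by (simp add: sum.swap[where A="lessThan d"] sum_distrib_left)
  also have "\<dots> = char_ext G (character \<rho>) \<alpha>"
    unfolding char_ext_def character_def using rho_car by (intro sum.cong) auto
  finally show ?thesis .
qed

lemma conv_e:
  assumes g: "g \<in> carrier G"
  shows "conv G \<alpha> (e_elt G d (character \<rho>)) g =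
    of_nat d / of_nat (card (carrier G)) * (\<Sum>i<d. \<Sum>k<d. \<rho> (inv g) $$ (i, k) * Rm \<alpha> $$ (k, i))"
proof -
  define D :: complex where "D = of_nat d / of_nat (card (carrier G))"
  have "conv G \<alpha> (e_elt G d (character \<rho>)) g =
     (\<Sum>x\<in>carrier G. D * (\<alpha> x * character \<rho> (inv g \<otimes> x)))"
    unfolding conv_def e_elt_def D_def using g by (intro sum.cong) (auto simp: inv_mult_group)
  also have "\<dots> = D * (\<Sum>x\<in>carrier G. \<alpha> x * character \<rho> (inv g \<otimes> x))"
    by (simp add: sum_distrib_left)
  also have "(\<Sum>x\<in>carrier G. \<alpha> x * character \<rho> (inv g \<otimes> x))
      = (\<Sum>x\<in>carrier G. \<Sum>i<d. \<Sum>k<d. \<rho> (inv g) $$ (i, k) * (\<alpha> x * \<rho> x $$ (k, i)))"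
  proof (intro sum.cong refl)
    fix x assume x: "x \<in> carrier G"
    have "character \<rho> (inv g \<otimes> x) = (\<Sum>i<d. \<rho> (inv g \<otimes> x) $$ (i, i))"
      unfolding character_def using x g by simp
    also have "\<dots> = (\<Sum>i<d. \<Sum>k<d. \<rho> (inv g) $$ (i, k) * \<rho> x $$ (k, i))"
      using x g by (intro sum.cong refl) (simp add: rho_mult_entry)
    finally show "\<alpha> x * character \<rho> (inv g \<otimes> x) = (\<Sum>i<d. \<Sum>k<d. \<rho> (inv g) $$ (i, k) * (\<alpha> x * \<rho> x $$ (k, i)))"
      by (simp add: sum_distrib_left mult_ac)
  qed
  also have "\<dots> = (\<Sum>i<d. \<Sum>k<d. \<Sum>x\<in>carrier G. \<rho> (inv g) $$ (i, k) * (\<alpha> x * \<rho> x $$ (k, i)))"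
    by (simp add: sum.swap[where A="carrier G"])
  also have "\<dots> = (\<Sum>i<d. \<Sum>k<d. \<rho> (inv g) $$ (i, k) * Rm \<alpha> $$ (k, i))"
    by (intro sum.cong refl) (simp add: Rm_entry sum_distrib_left)
  finally show ?thesis unfolding D_def .
qed

end

context hgrp
begin

lemma inv_H_iff:
  assumes h: "h \<in> H" and g: "g \<in> carrier G"
  shows "inv h \<otimes> g \<in> H \<longleftrightarrow> g \<in> H"
proof
  assume "inv h \<otimes> g \<in> H"
  then have "h \<otimes> (inv h \<otimes> g) \<in> H" using H_mult h by blast
  moreover have "h \<otimes> (inv h \<otimes> g) = g" using H_car[OF h] g by (simp add: m_assoc[symmetric])
  ultimately show "g \<in> H" by simp
next
  assume "g \<in> H" then show "inv h \<otimes> g \<in> H" using H_mult H_inv h by blast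
qed

end

context hrep
begin

lemma rho_H_P:
  assumes h: "h \<in> H"
  shows "\<rho> h * Rm (p_elt G H) = Rm (p_elt G H)"
proof -
  have hc: "h \<in> carrier G" using H_car h by blast
  have "\<rho> h * Rm (p_elt G H) = Rm (conv G (\<lambda>y. if y = h then 1 else 0) (p_elt G H))"
    unfolding Rm_delta[OF hc, symmetric] by (rule Rm_mult)
  also have "\<dots> = Rm (p_elt G H)"
    by (rule Rm_cong) (simp add: conv_delta[OF hc] p_elt_def inv_H_iff[OF h])
  finally show ?thesis .
qed

lemma PQ:
  assumes x: "x \<in> carrier G"
  shows "Rm (p_elt G H) * Rm (q_elt G H (double_coset G H x)) = Rm (q_elt G H (double_coset G H x))"
  unfolding Rm_mult by (rule Rm_cong) (rule conv_p_q[OF x])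

lemma QP:
  assumes x: "x \<in> carrier G"
  shows "Rm (q_elt G H (double_coset G H x)) * Rm (p_elt G H) = Rm (q_elt G H (double_coset G H x))"
  unfolding Rm_mult by (rule Rm_cong) (rule conv_q_p[OF x])

lemma fixed_rho: "w \<in> fixed_space d \<rho> H \<Longrightarrow> h \<in> H \<Longrightarrow> \<rho> h *\<^sub>v w = w"
  unfolding fixed_space_def by blast

lemma fixed_car: "w \<in> fixed_space d \<rho> H \<Longrightarrow> w \<in> carrier_vec d"
  unfolding fixed_space_def by blast

lemma P_fix:
  assumes w: "w \<in> fixed_space d \<rho> H"
  shows "Rm (p_elt G H) *\<^sub>v w = w"
proof (rule eq_vecI)
  have wc: "w \<in> carrier_vec d" using fixed_car[OF w] .
  fix i assume "i < dim_vec w"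
  then have i: "i < d" using wc by simp
  have "(Rm (p_elt G H) *\<^sub>v w) $ i = (\<Sum>g\<in>carrier G. p_elt G H g * (\<rho> g *\<^sub>v w) $ i)"
    by (rule Rm_vec[OF wc i])
  also have "\<dots> = (\<Sum>h\<in>H. (\<rho> h *\<^sub>v w) $ i) / of_nat (card H)" by (rule sum_on_H)
  also have "(\<Sum>h\<in>H. (\<rho> h *\<^sub>v w) $ i) = (\<Sum>h\<in>H. w $ i)"
    using fixed_rho[OF w] by (intro sum.cong) auto
  finally show "(Rm (p_elt G H) *\<^sub>v w) $ i = w $ i" using cardH by simp
next
  show "dim_vec (Rm (p_elt G H) *\<^sub>v w) = dim_vec w" using fixed_car[OF w] by simp
qed

lemma P_img:
  assumes u: "u \<in> carrier_vec d"
  shows "Rm (p_elt G H) *\<^sub>v u \<in> fixed_space d \<rho> H"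
  unfolding fixed_space_def
proof (intro CollectI conjI ballI)
  show "Rm (p_elt G H) *\<^sub>v u \<in> carrier_vec d" unfolding carrier_vec_def by simp
  fix h assume h: "h \<in> H"
  have "\<rho> h *\<^sub>v (Rm (p_elt G H) *\<^sub>v u) = (\<rho> h * Rm (p_elt G H)) *\<^sub>v u"
    using assoc_mult_mat_vec[OF rho_car[OF H_car[OF h]] Rm_car u] by simp
  then show "\<rho> h *\<^sub>v (Rm (p_elt G H) *\<^sub>v u) = Rm (p_elt G H) *\<^sub>v u"
    using rho_H_P[OF h] by simp
qed

lemma QcP:
  assumes x: "x \<in> carrier G" and od: "one_dimensional d (fixed_space d \<rho> H)"
  shows "Rm (q_elt G H (double_coset G H x)) =
     char_ext G (character \<rho>) (q_elt G H (double_coset G H x)) \<cdot>\<^sub>m Rm (p_elt G H)"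
proof -
  define P where "P = Rm (p_elt G H)"
  define Q where "Q = Rm (q_elt G H (double_coset G H x))"
  have Pc: "P \<in> carrier_mat d d" and Qc: "Q \<in> carrier_mat d d" unfolding P_def Q_def by auto
  obtain v0 where v0: "v0 \<in> carrier_vec d" "v0 \<noteq> 0\<^sub>v d"
    and fs: "fixed_space d \<rho> H = {c \<cdot>\<^sub>v v0 | c. True}"
    using od unfolding one_dimensional_def by blast
  have "v0 = 1 \<cdot>\<^sub>v v0" by simp
  then have v0f: "v0 \<in> fixed_space d \<rho> H" unfolding fs by blast
  have Pv0: "P *\<^sub>v v0 = v0" unfolding P_def by (rule P_fix[OF v0f])
  have lamex: "\<exists>l. P *\<^sub>v u = l \<cdot>\<^sub>v v0" if u: "u \<in> carrier_vec d" for u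
    using P_img[OF u] unfolding fs P_def by blast
  have "P *\<^sub>v (Q *\<^sub>v v0) = Q *\<^sub>v v0"
    using PQ[OF x] Pc Qc v0 unfolding P_def[symmetric] Q_def[symmetric]
    by (metis assoc_mult_mat_vec)
  moreover have "P *\<^sub>v (Q *\<^sub>v v0) \<in> fixed_space d \<rho> H"
    unfolding P_def by (rule P_img) (use Qc v0 in simp)
  ultimately obtain \<mu> where mu: "Q *\<^sub>v v0 = \<mu> \<cdot>\<^sub>v v0" unfolding fs by auto
  have QU: "Q *\<^sub>v u = \<mu> \<cdot>\<^sub>v (P *\<^sub>v u)" if u: "u \<in> carrier_vec d" for u
  proof -
    obtain l where l: "P *\<^sub>v u = l \<cdot>\<^sub>v v0" using lamex[OF u] by blast
    have "Q *\<^sub>v u = (Q * P) *\<^sub>v u"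
      using QP[OF x] unfolding P_def[symmetric] Q_def[symmetric] by simp
    also have "\<dots> = Q *\<^sub>v (P *\<^sub>v u)" using Pc Qc u by simp
    also have "\<dots> = Q *\<^sub>v (l \<cdot>\<^sub>v v0)" unfolding l ..
    also have "\<dots> = l \<cdot>\<^sub>v (Q *\<^sub>v v0)" by (rule mult_mat_vec[OF Qc v0(1)])
    also have "\<dots> = (l * \<mu>) \<cdot>\<^sub>v v0" unfolding mu by (simp add: smult_smult_assoc)
    also have "\<dots> = \<mu> \<cdot>\<^sub>v (P *\<^sub>v u)" unfolding l by (simp add: smult_smult_assoc mult.commute)
    finally show ?thesis .
  qed
  have Qent: "Q $$ (i, j) = \<mu> * P $$ (i, j)" if "i < d" "j < d" for i j
  proof -
    have "Q $$ (i, j) = (Q *\<^sub>v unit_vec d j) $ i" using Qc that by (simp add: mat_unit_entry)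
    also have "\<dots> = \<mu> * (P *\<^sub>v unit_vec d j) $ i" unfolding QU[OF unit_vec_carrier] using Pc that by simp
    also have "\<dots> = \<mu> * P $$ (i, j)" using Pc that by (simp add: mat_unit_entry)
    finally show ?thesis .
  qed
  have "\<forall>j\<in>{..<d}. \<exists>l. P *\<^sub>v unit_vec d j = l \<cdot>\<^sub>v v0" using lamex by simp
  from bchoice[OF this] obtain lam where lam0: "\<forall>j\<in>{..<d}. P *\<^sub>v unit_vec d j = lam j \<cdot>\<^sub>v v0"
    by blast
  have lam: "\<And>j. j < d \<Longrightarrow> P *\<^sub>v unit_vec d j = lam j \<cdot>\<^sub>v v0" using lam0 by simp
  have Pent: "P $$ (i, j) = lam j * v0 $ i" if "i < d" "j < d" for i j
  proof -
    have "P $$ (i, j) = (P *\<^sub>v unit_vec d j) $ i" using Pc that by (simp add: mat_unit_entry)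
    also have "\<dots> = lam j * v0 $ i" unfolding lam[OF that(2)] using v0 that by simp
    finally show ?thesis .
  qed
  obtain i0 where i0: "i0 < d" "v0 $ i0 \<noteq> 0"
  proof -
    have "\<exists>i<d. v0 $ i \<noteq> 0"
    proof (rule ccontr)
      assume "\<not> (\<exists>i<d. v0 $ i \<noteq> 0)"
      then have "v0 = 0\<^sub>v d" using v0(1) by (intro eq_vecI) auto
      then show False using v0(2) by simp
    qed
    then show ?thesis using that by blast
  qed
  have "v0 $ i0 = (P *\<^sub>v v0) $ i0" unfolding Pv0 ..
  also have "\<dots> = (\<Sum>k<d. P $$ (i0, k) * v0 $ k)" by (rule mat_vec_entry) (use Pc v0 i0 in auto)
  also have "\<dots> = (\<Sum>k<d. v0 $ i0 * (lam k * v0 $ k))" using i0 by (intro sum.cong) (auto simp: Pent)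
  also have "\<dots> = v0 $ i0 * (\<Sum>k<d. lam k * v0 $ k)" by (simp add: sum_distrib_left)
  finally have S1: "(\<Sum>k<d. lam k * v0 $ k) = 1" using i0 by simp
  have "(\<Sum>i<d. P $$ (i, i)) = (\<Sum>i<d. lam i * v0 $ i)"
    by (intro sum.cong) (auto simp: Pent)
  then have trP: "(\<Sum>i<d. P $$ (i, i)) = 1" using S1 by simp
  have "(\<Sum>i<d. Q $$ (i, i)) = (\<Sum>i<d. \<mu> * P $$ (i, i))"
    by (intro sum.cong) (auto simp: Qent)
  then have trQ: "(\<Sum>i<d. Q $$ (i, i)) = \<mu>"
    by (simp add: sum_distrib_left[symmetric] trP)
  have c: "char_ext G (character \<rho>) (q_elt G H (double_coset G H x)) = \<mu>"
    using trQ unfolding Q_def Rm_trace .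
  show ?thesis unfolding c Q_def[symmetric] P_def[symmetric]
    by (rule eq_matI) (use Pc Qc in \<open>auto simp: Qent\<close>)
qed

end

context hrep
begin

lemma Q_v0:
  assumes x: "x \<in> carrier G" and od: "one_dimensional d (fixed_space d \<rho> H)"
    and v0f: "v0 \<in> fixed_space d \<rho> H"
  shows "Rm (q_elt G H (double_coset G H x)) *\<^sub>v v0 =
    char_ext G (character \<rho>) (q_elt G H (double_coset G H x)) \<cdot>\<^sub>v v0"
proof -
  let ?c = "char_ext G (character \<rho>) (q_elt G H (double_coset G H x))"
  have v0: "v0 \<in> carrier_vec d" using fixed_car[OF v0f] .
  show ?thesis
  proof (rule eq_vecI)
    fix i assume "i < dim_vec (?c \<cdot>\<^sub>v v0)"
    then have i: "i < d" using v0 by simp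
    have "(Rm (q_elt G H (double_coset G H x)) *\<^sub>v v0) $ i = (\<Sum>k<d. (?c \<cdot>\<^sub>m Rm (p_elt G H)) $$ (i, k) * v0 $ k)"
      unfolding QcP[OF x od, symmetric] by (rule mat_vec_entry) (use v0 i in auto)
    also have "\<dots> = ?c * (\<Sum>k<d. Rm (p_elt G H) $$ (i, k) * v0 $ k)"
      using i by (simp add: sum_distrib_left mult_ac)
    also have "(\<Sum>k<d. Rm (p_elt G H) $$ (i, k) * v0 $ k) = (Rm (p_elt G H) *\<^sub>v v0) $ i"
      by (rule mat_vec_entry[symmetric]) (use v0 i in auto)
    also have "\<dots> = v0 $ i" unfolding P_fix[OF v0f] ..
    finally show "(Rm (q_elt G H (double_coset G H x)) *\<^sub>v v0) $ i = (?c \<cdot>\<^sub>v v0) $ i"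
      using i v0 by simp
  qed (use v0 in simp)
qed

lemma sum_nth_set:
  assumes "distinct cs"
  shows "(\<Sum>j<length cs. f (cs ! j)) = (\<Sum>C\<in>set cs. f C)"
  by (rule sum.reindex_bij_betw) (rule bij_betw_nth[OF assms], auto)

lemma c_algint:
  assumes x: "x \<in> carrier G" and od: "one_dimensional d (fixed_space d \<rho> H)"
  shows "algebraic_int (char_ext G (character \<rho>) (q_elt G H (double_coset G H x)))"
proof -
  define D where "D = double_coset G H x"
  define c where "c = char_ext G (character \<rho>) (q_elt G H D)"
  define Q where "Q = Rm (q_elt G H D)"
  have Dc: "D \<subseteq> carrier G" unfolding D_def by (rule dc_sub[OF x])
  obtain v0 where v0: "v0 \<in> carrier_vec d" "v0 \<noteq> 0\<^sub>v d"
    and fs: "fixed_space d \<rho> H = {c \<cdot>\<^sub>v v0 | c. True}"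
    using od unfolding one_dimensional_def by blast
  have "v0 = 1 \<cdot>\<^sub>v v0" by simp
  then have v0f: "v0 \<in> fixed_space d \<rho> H" unfolding fs by blast
  have Qv0: "Q *\<^sub>v v0 = c \<cdot>\<^sub>v v0" unfolding Q_def c_def D_def by (rule Q_v0[OF x od v0f])
  obtain j0 where j0: "j0 < d" "v0 $ j0 \<noteq> 0"
  proof -
    have "\<exists>i<d. v0 $ i \<noteq> 0"
    proof (rule ccontr)
      assume "\<not> (\<exists>i<d. v0 $ i \<noteq> 0)"
      then have "v0 = 0\<^sub>v d" using v0(1) by (intro eq_vecI) auto
      then show False using v0(2) by simp
    qed
    then show ?thesis using that by blast
  qed
  define fv where "fv r = (\<rho> r *\<^sub>v v0) $ j0" for r
  have fvH: "fv (r \<otimes> h) = fv r" if r: "r \<in> carrier G" and h: "h \<in> H" for r h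
  proof -
    have hc: "h \<in> carrier G" using H_car h by blast
    have "\<rho> (r \<otimes> h) *\<^sub>v v0 = (\<rho> r * \<rho> h) *\<^sub>v v0" using rho_mult[OF r hc] by simp
    also have "\<dots> = \<rho> r *\<^sub>v (\<rho> h *\<^sub>v v0)" using rho_car[OF r] rho_car[OF hc] v0 by simp
    also have "\<dots> = \<rho> r *\<^sub>v v0" using fixed_rho[OF v0f h] by simp
    finally show ?thesis unfolding fv_def by simp
  qed
  have fvH1: "fv h = v0 $ j0" if h: "h \<in> H" for h
    unfolding fv_def using fixed_rho[OF v0f h] by simp
  have key: "c * fv r = (\<Sum>C\<in>LC ((\<lambda>y. r \<otimes> y) ` D). fv (SOME y. y \<in> C))"
    if r: "r \<in> carrier G" for r
  proof -
    define rD where "rD = (\<lambda>y. r \<otimes> y) ` D"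
    have rDc: "rD \<subseteq> carrier G" unfolding rD_def using Dc r by auto
    have memrD: "g \<in> rD \<longleftrightarrow> inv r \<otimes> g \<in> D" if g: "g \<in> carrier G" for g
    proof
      assume "g \<in> rD"
      then obtain y where y: "y \<in> D" "g = r \<otimes> y" unfolding rD_def by blast
      then show "inv r \<otimes> g \<in> D" using r Dc by auto
    next
      assume "inv r \<otimes> g \<in> D"
      moreover have "g = r \<otimes> (inv r \<otimes> g)" using r g by simp
      ultimately show "g \<in> rD" unfolding rD_def by blast
    qed
    have "\<rho> r *\<^sub>v (c \<cdot>\<^sub>v v0) = c \<cdot>\<^sub>v (\<rho> r *\<^sub>v v0)" by (rule mult_mat_vec[OF rho_car[OF r] v0(1)])
    then have "c * fv r = (\<rho> r *\<^sub>v (c \<cdot>\<^sub>v v0)) $ j0"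
      unfolding fv_def using r j0 by simp
    also have "\<rho> r *\<^sub>v (c \<cdot>\<^sub>v v0) = (\<rho> r * Q) *\<^sub>v v0"
      unfolding Qv0[symmetric] using assoc_mult_mat_vec[OF rho_car[OF r] Rm_car v0(1)] unfolding Q_def by simp
    also have "\<rho> r * Q = Rm (conv G (\<lambda>y. if y = r then 1 else 0) (q_elt G H D))"
      unfolding Q_def Rm_delta[OF r, symmetric] by (rule Rm_mult)
    also have "\<dots> = Rm (\<lambda>g. q_elt G H D (inv r \<otimes> g))"
      by (rule Rm_cong) (rule conv_delta[OF r])
    also have "(Rm (\<lambda>g. q_elt G H D (inv r \<otimes> g)) *\<^sub>v v0) $ j0 =
        (\<Sum>g\<in>carrier G. q_elt G H D (inv r \<otimes> g) * fv g)"
      unfolding fv_def by (rule Rm_vec[OF v0(1) j0(1)])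
    also have "\<dots> = (\<Sum>g\<in>carrier G. if g \<in> rD then fv g / of_nat (card H) else 0)"
      using r by (intro sum.cong refl) (auto simp: q_elt_def memrD)
    also have "\<dots> = (\<Sum>g\<in>carrier G \<inter> rD. fv g / of_nat (card H))"
      using fin by (simp add: sum.inter_restrict)
    also have "carrier G \<inter> rD = rD" using rDc by blast
    also have "(\<Sum>g\<in>rD. fv g / of_nat (card H)) = (\<Sum>C\<in>LC rD. \<Sum>g\<in>C. fv g / of_nat (card H))"
    proof (rule sum_LC[OF rDc])
      fix y h assume y: "y \<in> rD" and h: "h \<in> H"
      then obtain z where z: "z \<in> D" "y = r \<otimes> z" unfolding rD_def by blast
      have zc: "z \<in> carrier G" using z Dc by blast
      have "y \<otimes> h = r \<otimes> (z \<otimes> h)" using z(2) r zc H_car[OF h] by (simp add: m_assoc)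
      moreover have "z \<otimes> h \<in> D" unfolding D_def using dc_right[OF x _ h] z(1) unfolding D_def by blast
      ultimately show "y \<otimes> h \<in> rD" unfolding rD_def by blast
    qed
    also have "\<dots> = (\<Sum>C\<in>LC rD. fv (SOME y. y \<in> C))"
    proof (rule sum.cong[OF refl])
      fix C assume C: "C \<in> LC rD"
      define s where "s = (SOME y. y \<in> C)"
      have s: "s \<in> carrier G" "l_coset G s H = C" using LC_rep[OF rDc C] unfolding s_def by auto
      have "(\<Sum>g\<in>C. fv g / of_nat (card H)) = (\<Sum>h\<in>H. fv (s \<otimes> h) / of_nat (card H))"
        unfolding s(2)[symmetric] by (rule sum_lcos[OF s(1)])
      also have "\<dots> = (\<Sum>h\<in>H. fv s / of_nat (card H))"
        using fvH[OF s(1)] by (intro sum.cong) auto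
      also have "\<dots> = fv s" using cardH by simp
      finally show "(\<Sum>g\<in>C. fv g / of_nat (card H)) = fv (SOME y. y \<in> C)" unfolding s_def .
    qed
    finally show ?thesis unfolding rD_def .
  qed
  define L where "L = LC (carrier G)"
  have finL: "finite L" unfolding L_def LC_def using fin by auto
  obtain cs where cs: "set cs = L" "distinct cs" using finite_distinct_list[OF finL] by blast
  define m where "m = length cs"
  define rr where "rr i = (SOME y. y \<in> cs ! i)" for i
  define A :: "int mat" where "A = mat m m (\<lambda>(i, j). if cs ! j \<in> LC ((\<lambda>y. rr i \<otimes> y) ` D) then 1 else 0)"
  define t where "t = vec m (\<lambda>i. fv (rr i))"
  have Ac: "A \<in> carrier_mat m m" unfolding A_def by simp
  have tc: "t \<in> carrier_vec m" unfolding t_def by simp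
  have rrc: "rr i \<in> carrier G" if "i < m" for i
  proof -
    have "cs ! i \<in> L" using cs that unfolding m_def by auto
    then show ?thesis unfolding rr_def L_def using LC_rep(3)[of "carrier G"] by blast
  qed
  have eig: "map_mat of_int A *\<^sub>v t = c \<cdot>\<^sub>v t"
  proof (rule eq_vecI)
    fix i assume "i < dim_vec (c \<cdot>\<^sub>v t)"
    then have i: "i < m" using tc by simp
    define LCi where "LCi = LC ((\<lambda>y. rr i \<otimes> y) ` D)"
    have LCiL: "LCi \<subseteq> L" unfolding LCi_def L_def LC_def using rrc[OF i] Dc by auto
    have "(map_mat of_int A *\<^sub>v t) $ i = (\<Sum>j<m. (map_mat of_int A :: complex mat) $$ (i, j) * t $ j)"
      by (rule mat_vec_entry) (use i Ac tc in auto)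
    also have "\<dots> = (\<Sum>j<m. if cs ! j \<in> LCi then fv (SOME y. y \<in> cs ! j) else 0)"
      using i by (intro sum.cong refl) (auto simp: A_def t_def LCi_def rr_def)
    also have "\<dots> = (\<Sum>C\<in>L. if C \<in> LCi then fv (SOME y. y \<in> C) else 0)"
      unfolding m_def cs(1)[symmetric] by (rule sum_nth_set[OF cs(2)])
    also have "\<dots> = (\<Sum>C\<in>L \<inter> LCi. fv (SOME y. y \<in> C))"
      using finL by (simp add: sum.inter_restrict)
    also have "L \<inter> LCi = LCi" using LCiL by blast
    also have "(\<Sum>C\<in>LCi. fv (SOME y. y \<in> C)) = c * fv (rr i)"
      unfolding LCi_def using key[OF rrc[OF i]] by simp
    finally show "(map_mat of_int A *\<^sub>v t) $ i = (c \<cdot>\<^sub>v t) $ i" using i unfolding t_def by simp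
  qed (use Ac tc in simp)
  have "H \<in> L" unfolding L_def LC_def using lcos_mult_one[OF H_sub] by force
  then obtain i0 where i0: "i0 < m" "cs ! i0 = H" using cs unfolding m_def by (metis in_set_conv_nth)
  have "rr i0 \<in> H" unfolding rr_def i0(2) using H_one by (rule someI)
  then have "t $ i0 \<noteq> 0" unfolding t_def using i0 fvH1 j0 by simp
  then have tnz: "t \<noteq> 0\<^sub>v m" using i0 by auto
  have ev: "eigenvector (map_mat of_int A) t c"
    unfolding eigenvector_def using Ac tc tnz eig by simp
  have Ac': "(map_mat of_int A :: complex mat) \<in> carrier_mat m m" using Ac by simp
  have "poly (char_poly (map_mat of_int A)) c = 0"
    using eigenvalue_root_char_poly[OF Ac'] ev unfolding eigenvalue_def by blast
  then have "poly (of_int_poly (char_poly A)) c = 0"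
    unfolding of_int_hom.char_poly_hom[OF Ac] .
  moreover have "lead_coeff (char_poly A) = 1"
    using degree_monic_char_poly[OF Ac] by simp
  ultimately have "algebraic_int c" unfolding algebraic_int_altdef_ipoly by blast
  then show ?thesis unfolding c_def D_def .
qed

end

lemma zmul_sum_left: "zmul (\<Sum>x\<in>A. f x) b = (\<Sum>x\<in>A. zmul (f x) b)"
  by (induction A rule: infinite_finite_induct) (auto simp: zmul_add_left)

context hrep
begin

lemma conv_qe:
  assumes x: "x \<in> carrier G" and od: "one_dimensional d (fixed_space d \<rho> H)" and g: "g \<in> carrier G"
  shows "conv G (q_elt G H (double_coset G H x)) (e_elt G d (character \<rho>)) g =
    char_ext G (character \<rho>) (q_elt G H (double_coset G H x)) * conv G (p_elt G H) (e_elt G d (character \<rho>)) g"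
proof -
  let ?c = "char_ext G (character \<rho>) (q_elt G H (double_coset G H x))"
  have ent: "Rm (q_elt G H (double_coset G H x)) $$ (k, i) = ?c * Rm (p_elt G H) $$ (k, i)"
    if "k < d" "i < d" for k i
    unfolding QcP[OF x od] using that by simp
  have "(\<Sum>i<d. \<Sum>k<d. \<rho> (inv g) $$ (i, k) * Rm (q_elt G H (double_coset G H x)) $$ (k, i))
      = (\<Sum>i<d. \<Sum>k<d. ?c * (\<rho> (inv g) $$ (i, k) * Rm (p_elt G H) $$ (k, i)))"
    by (intro sum.cong refl) (simp add: ent)
  also have "\<dots> = ?c * (\<Sum>i<d. \<Sum>k<d. \<rho> (inv g) $$ (i, k) * Rm (p_elt G H) $$ (k, i))"
    by (simp add: sum_distrib_left)
  finally show ?thesis unfolding conv_e[OF g] by simp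
qed

lemma sumC_conv:
  assumes x: "x \<in> carrier G" and g: "g \<in> carrier G"
  shows "(\<Sum>C\<in>LC (double_coset G H x). conv G (p_elt G H) \<phi> (inv (SOME y. y \<in> C) \<otimes> g))
    = conv G (q_elt G H (double_coset G H x)) \<phi> g"
proof -
  define D where "D = double_coset G H x"
  have Dc: "D \<subseteq> carrier G" unfolding D_def by (rule dc_sub[OF x])
  have "(\<Sum>C\<in>LC D. conv G (p_elt G H) \<phi> (inv (SOME y. y \<in> C) \<otimes> g))
      = (\<Sum>C\<in>LC D. (\<Sum>y\<in>C. \<phi> (inv y \<otimes> g)) / of_nat (card H))"
  proof (rule sum.cong[OF refl])
    fix C assume C: "C \<in> LC D"
    define s where "s = (SOME y. y \<in> C)"
    have s: "s \<in> carrier G" "l_coset G s H = C" using LC_rep[OF Dc C] unfolding s_def by auto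
    have "conv G (p_elt G H) \<phi> (inv s \<otimes> g) = (\<Sum>h\<in>H. \<phi> (inv h \<otimes> (inv s \<otimes> g))) / of_nat (card H)"
      unfolding conv_def by (rule sum_on_H)
    also have "(\<Sum>h\<in>H. \<phi> (inv h \<otimes> (inv s \<otimes> g))) = (\<Sum>h\<in>H. \<phi> (inv (s \<otimes> h) \<otimes> g))"
      using s(1) g H_car by (intro sum.cong refl) (simp add: inv_mult_group m_assoc)
    also have "\<dots> = (\<Sum>y\<in>C. \<phi> (inv y \<otimes> g))"
      unfolding s(2)[symmetric] by (rule sum_lcos[OF s(1), symmetric])
    finally show "conv G (p_elt G H) \<phi> (inv (SOME y. y \<in> C) \<otimes> g) = (\<Sum>y\<in>C. \<phi> (inv y \<otimes> g)) / of_nat (card H)"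
      unfolding s_def .
  qed
  also have "\<dots> = (\<Sum>C\<in>LC D. \<Sum>y\<in>C. \<phi> (inv y \<otimes> g)) / of_nat (card H)"
    by (simp add: sum_divide_distrib)
  also have "(\<Sum>C\<in>LC D. \<Sum>y\<in>C. \<phi> (inv y \<otimes> g)) = (\<Sum>y\<in>D. \<phi> (inv y \<otimes> g))"
    by (rule sum_LC[OF Dc, symmetric]) (use dc_right[OF x] in \<open>unfold D_def, blast\<close>)
  also have "(\<Sum>y\<in>D. \<phi> (inv y \<otimes> g)) / of_nat (card H) = conv G (q_elt G H D) \<phi> g"
  proof -
    have "carrier G \<inter> D = D" using Dc by blast
    then show ?thesis unfolding conv_def sum_on_D by simp
  qed
  finally show ?thesis unfolding D_def .
qed

lemma act_int_act:
  assumes add: "additive_action G act" and y: "y \<in> carrier G"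
  shows "act y (int_act G act \<beta> a) = int_act G act (\<lambda>g. \<beta> (inv y \<otimes> g)) a"
proof -
  have aadd: "act y (u + v) = act y u + act y v" for u v
    using add y unfolding additive_action_def by blast
  have amult: "act (y \<otimes> g) b = act y (act g b)" if "g \<in> carrier G" for g b
    using add y that unfolding additive_action_def by blast
  have a0: "act y 0 = 0" using aadd[of 0 0] by simp
  have asum: "act y (sum f A) = (\<Sum>i\<in>A. act y (f i))" for f A
    by (induction A rule: infinite_finite_induct) (auto simp: a0 aadd)
  have "act y (int_act G act \<beta> a) = (\<Sum>g\<in>carrier G. act y (zmul (ti (\<beta> g)) (act g a)))"
    unfolding int_act_ti asum ..
  also have "\<dots> = (\<Sum>g\<in>carrier G. zmul (ti (\<beta> g)) (act (y \<otimes> g) a))"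
    by (intro sum.cong refl) (simp add: zmul_hom[of "act y", OF aadd] amult)
  also have "\<dots> = (\<Sum>g\<in>carrier G. zmul (ti (\<beta> (inv y \<otimes> g))) (act (y \<otimes> (inv y \<otimes> g)) a))"
    by (rule sum_reindex_left) (use y in simp)
  also have "\<dots> = (\<Sum>g\<in>carrier G. zmul (ti (\<beta> (inv y \<otimes> g))) (act g a))"
    using y by (intro sum.cong refl) simp
  finally show ?thesis unfolding int_act_ti .
qed

lemma q_act_LC: "q_act G act H D z = (\<Sum>C\<in>LC D. act (SOME x. x \<in> C) z)"
  unfolding q_act_def LC_def ..

end

theorem lemma4p4:
  fixes G :: "('g, 'b) monoid_scheme"
    and act :: "'g \<Rightarrow> 'a::ab_group_add \<Rightarrow> 'a"
    and H :: "'g set"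
    and d :: nat
    and \<rho> :: "'g \<Rightarrow> complex mat"
  assumes "group G" and "finite (carrier G)"
    and "additive_action G act"
    and "subgroup H G"
    and "irreducible_rep G d \<rho>"
    and "one_dimensional d (fixed_space d \<rho> H)"
    and "\<forall>g\<in>carrier G. character \<rho> g \<in> \<rat>"
  shows "\<forall>x\<in>carrier G.
           \<exists>k::int. char_ext G (character \<rho>) (q_elt G H (double_coset G H x)) = of_int k \<and>
             (\<forall>n::nat. n > 0 \<and>
                integral_elt G (\<lambda>g. of_nat n * conv G (p_elt G H) (e_elt G d (character \<rho>)) g) \<longrightarrow>
                (\<forall>a. let z = int_act G act (\<lambda>g. of_nat n * conv G (p_elt G H) (e_elt G d (character \<rho>)) g) a
                     in q_act G act H (double_coset G H x) z = zmul k z))"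
proof (intro ballI)
  fix x assume x: "x \<in> carrier G"
  have mr: "matrix_rep G d \<rho>" using assms(5) unfolding irreducible_rep_def by blast
  have "hrep G H d \<rho>" unfolding hrep_def hgrp_def hgrp_axioms_def hrep_axioms_def
    using assms(1,2,4) mr by blast
  then interpret hrep G H d \<rho> .
  note od = assms(6)
  define D where "D = double_coset G H x"
  define c where "c = char_ext G (character \<rho>) (q_elt G H D)"
  define e where "e = e_elt G d (character \<rho>)"
  have ai: "algebraic_int c" unfolding c_def D_def by (rule c_algint[OF x od])
  have "c \<in> \<rat>" unfolding c_def char_ext_def
  proof (rule Rats_sum)
    fix g assume g: "g \<in> carrier G"
    have "q_elt G H D g \<in> \<rat>" unfolding q_elt_def by auto
    moreover have "character \<rho> g \<in> \<rat>" using assms(7) g by blast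
    ultimately show "q_elt G H D g * character \<rho> g \<in> \<rat>" by (rule Rats_mult)
  qed
  then have "c \<in> \<int>" using ai rational_algebraic_int_is_int by blast
  then obtain k where k: "c = of_int k" by (elim Ints_cases)
  show "\<exists>k::int. char_ext G (character \<rho>) (q_elt G H (double_coset G H x)) = of_int k \<and>
             (\<forall>n::nat. n > 0 \<and>
                integral_elt G (\<lambda>g. of_nat n * conv G (p_elt G H) (e_elt G d (character \<rho>)) g) \<longrightarrow>
                (\<forall>a. let z = int_act G act (\<lambda>g. of_nat n * conv G (p_elt G H) (e_elt G d (character \<rho>)) g) a
                     in q_act G act H (double_coset G H x) z = zmul k z))"
  proof (intro exI[of _ k] conjI allI impI)
    show "char_ext G (character \<rho>) (q_elt G H (double_coset G H x)) = of_int k"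
      using k unfolding c_def D_def .
    fix n :: nat and a
    assume na: "0 < n \<and> integral_elt G (\<lambda>g. of_nat n * conv G (p_elt G H) (e_elt G d (character \<rho>)) g)"
    define \<beta> where "\<beta> g = of_nat n * conv G (p_elt G H) e g" for g
    have bint: "\<beta> g \<in> \<int>" if "g \<in> carrier G" for g
      using na that unfolding integral_elt_def \<beta>_def e_def by blast
    define z where "z = int_act G act \<beta> a"
    have Dc: "D \<subseteq> carrier G" unfolding D_def by (rule dc_sub[OF x])
    have rc: "(SOME y. y \<in> C) \<in> carrier G" if "C \<in> LC D" for C
      using LC_rep(3)[OF Dc that] .
    have coef: "(\<Sum>C\<in>LC D. ti (\<beta> (inv\<^bsub>G\<^esub> (SOME y. y \<in> C) \<otimes>\<^bsub>G\<^esub> g))) = k * ti (\<beta> g)"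
      if g: "g \<in> carrier G" for g
    proof -
      have "of_int (\<Sum>C\<in>LC D. ti (\<beta> (inv\<^bsub>G\<^esub> (SOME y. y \<in> C) \<otimes>\<^bsub>G\<^esub> g))) = (\<Sum>C\<in>LC D. \<beta> (inv\<^bsub>G\<^esub> (SOME y. y \<in> C) \<otimes>\<^bsub>G\<^esub> g))"
        unfolding of_int_sum using rc g by (intro sum.cong refl ti_Ints bint) simp
      also have "\<dots> = of_nat n * (\<Sum>C\<in>LC D. conv G (p_elt G H) e (inv\<^bsub>G\<^esub> (SOME y. y \<in> C) \<otimes>\<^bsub>G\<^esub> g))"
        unfolding \<beta>_def by (simp add: sum_distrib_left)
      also have "(\<Sum>C\<in>LC D. conv G (p_elt G H) e (inv\<^bsub>G\<^esub> (SOME y. y \<in> C) \<otimes>\<^bsub>G\<^esub> g)) = conv G (q_elt G H D) e g"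
        unfolding D_def by (rule sumC_conv[OF x g])
      also have "\<dots> = c * conv G (p_elt G H) e g"
        unfolding D_def c_def e_def by (rule conv_qe[OF x od g])
      also have "of_nat n * (c * conv G (p_elt G H) e g) = of_int k * \<beta> g"
        unfolding \<beta>_def k by simp
      also have "\<dots> = of_int (k * ti (\<beta> g))" using ti_Ints[OF bint[OF g]] by simp
      finally show ?thesis by (simp only: of_int_eq_iff)
    qed
    have "q_act G act H D z = (\<Sum>C\<in>LC D. act (SOME y. y \<in> C) z)" by (rule q_act_LC)
    also have "\<dots> = (\<Sum>C\<in>LC D. int_act G act (\<lambda>g. \<beta> (inv\<^bsub>G\<^esub> (SOME y. y \<in> C) \<otimes>\<^bsub>G\<^esub> g)) a)"
      unfolding z_def using rc by (intro sum.cong refl act_int_act[OF assms(3)]) simp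
    also have "\<dots> = (\<Sum>C\<in>LC D. \<Sum>g\<in>carrier G. zmul (ti (\<beta> (inv\<^bsub>G\<^esub> (SOME y. y \<in> C) \<otimes>\<^bsub>G\<^esub> g))) (act g a))"
      unfolding int_act_ti ..
    also have "\<dots> = (\<Sum>g\<in>carrier G. \<Sum>C\<in>LC D. zmul (ti (\<beta> (inv\<^bsub>G\<^esub> (SOME y. y \<in> C) \<otimes>\<^bsub>G\<^esub> g))) (act g a))"
      by (rule sum.swap)
    also have "\<dots> = (\<Sum>g\<in>carrier G. zmul (\<Sum>C\<in>LC D. ti (\<beta> (inv\<^bsub>G\<^esub> (SOME y. y \<in> C) \<otimes>\<^bsub>G\<^esub> g))) (act g a))"
      by (simp only: zmul_sum_left)
    also have "\<dots> = (\<Sum>g\<in>carrier G. zmul k (zmul (ti (\<beta> g)) (act g a)))"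
      by (intro sum.cong refl) (simp add: coef zmul_mult)
    also have "\<dots> = zmul k z" unfolding z_def int_act_ti zmul_sum ..
    finally have "q_act G act H D z = zmul k z" .
    then show "let z = int_act G act (\<lambda>g. of_nat n * conv G (p_elt G H) (e_elt G d (character \<rho>)) g) a
                     in q_act G act H (double_coset G H x) z = zmul k z"
      unfolding z_def \<beta>_def e_def D_def Let_def .
  qed
qed

end
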